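(* Suppose Assumption (A-1) below holds. Let $S_n=-\frac{2}{n(n-1)}X^\top\xi$, where $\xi=2r-(n+1)e_n$ and $r$ is uniformly distributed over all permutations of $(1,\dots,n)$. Then for every $t>0$, $$\Pr\big(\Psi^d(S_n)\ge t\big)\le 2p\exp\Big(-\frac{nt^2}{32 b_1^2c_p^2}\Big).$$
   Context: $X\in\mathbb{R}^{n\times p}$ has rows $X_1^\top,\dots,X_n^\top$, $n\ge2$; $\beta^*\in\mathbb{R}^p$ is fixed. $[p]$ is partitioned into nonempty disjoint groups $\mathcal{G}_1,\dots,\mathcal{G}_g$ with weights $w_l>0$; $\Psi(\beta)=\sum_lw_l\|\beta_{\mathcal{G}_l}\|_2$, $\Psi^d(v)=\max_l\|v_{\mathcal{G}_l}\|_2/w_l$, $c_p=\max_lw_l^{-1}\sqrt{|\mathcal{G}_l|}$. $\mathcal{A}_0=\{l:\mathcal{G}_l\cap\{j:\beta^*_j\neq0\}\neq\emptyset\}$, $\Omega=\bigcup_{l\in\mathcal{A}_0}\mathcal{G}_l$, $\bar\Omega=[p]\setminus\Omega$, $\Psi_\Omega(\gamma)=\Psi(\mathcal{P}_\Omega\gamma)$, $\Psi_{\bar\Omega}(\gamma)=\Psi(\mathcal{P}_{\bar\Omega}\gamma)$ ($\mathcal{P}_\Omega$ zeroes coordinates outside $\Omega$). For a given $c_0>1$, $\bar c=1+\frac{c_0+1}{c_0-1}$. (A-1) $\sum_iX_i=0$; $|X_{ij}|\le b_1$ for all $i,j$, for a constant $b_1>0$; and there is $b_2>0$ with $\gamma^\top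 X^\top X\gamma/(n\|\gamma\|_2^2)\ge b_2$ for all nonzero $\gamma$ with $\Psi_{\bar\Omega}(\gamma)\le(\bar c-1)\Psi_\Omega(\gamma)$. *)

theory Defs
  imports "HOL-Probability.Probability" "HOL-Combinatorics.Permutations"
begin

(* Vectors in R^p are functions nat => real, only indices < p matter.
   Groups: G :: nat => nat set, indexed by l < g (0-based). *)

definition gnorm :: "nat set \<Rightarrow> (nat \<Rightarrow> real) \<Rightarrow> real" where
  "gnorm A v = sqrt (\<Sum>j\<in>A. (v j)\<^sup>2)"

definition Psi :: "nat \<Rightarrow> (nat \<Rightarrow> nat set) \<Rightarrow> (nat \<Rightarrow> real) \<Rightarrow> (nat \<Rightarrow> real) \<Rightarrow> real" where
  "Psi g G w \<beta> = (\<Sum>l<g. w l * gnorm (G l) \<beta>)"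

definition Psi_dual :: "nat \<Rightarrow> (nat \<Rightarrow> nat set) \<Rightarrow> (nat \<Rightarrow> real) \<Rightarrow> (nat \<Rightarrow> real) \<Rightarrow> real" where
  "Psi_dual g G w v = Max ((\<lambda>l. gnorm (G l) v / w l) ` {..<g})"

definition c_p :: "nat \<Rightarrow> (nat \<Rightarrow> nat set) \<Rightarrow> (nat \<Rightarrow> real) \<Rightarrow> real" where
  "c_p g G w = Max ((\<lambda>l. sqrt (real (card (G l))) / w l) ` {..<g})"

definition proj :: "nat set \<Rightarrow> (nat \<Rightarrow> real) \<Rightarrow> (nat \<Rightarrow> real)" where
  "proj A \<gamma> = (\<lambda>j. if j \<in> A then \<gamma> j else 0)"

definition active_groups :: "nat \<Rightarrow> (nat \<Rightarrow> nat set) \<Rightarrow> nat \<Rightarrow> (nat \<Rightarrow> real) \<Rightarrow> nat set" where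
  "active_groups g G p \<beta>s = {l. l < g \<and> G l \<inter> {j. j < p \<and> \<beta>s j \<noteq> 0} \<noteq> {}}"

definition Omega :: "nat \<Rightarrow> (nat \<Rightarrow> nat set) \<Rightarrow> nat \<Rightarrow> (nat \<Rightarrow> real) \<Rightarrow> nat set" where
  "Omega g G p \<beta>s = (\<Union>l\<in>active_groups g G p \<beta>s. G l)"

definition cbar :: "real \<Rightarrow> real" where
  "cbar c0 = 1 + (c0 + 1) / (c0 - 1)"

(* S_n for the permutation sigma of {0..<n}: r_i = sigma i + 1, xi_i = 2 r_i - (n+1),
   S_n = -2/(n(n-1)) X^T xi *)
definition S_n :: "nat \<Rightarrow> (nat \<Rightarrow> nat \<Rightarrow> real) \<Rightarrow> (nat \<Rightarrow> nat) \<Rightarrow> (nat \<Rightarrow> real)" where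
  "S_n n X \<sigma> = (\<lambda>j. - 2 / (real n * (real n - 1)) *
      (\<Sum>i<n. X i j * (2 * real (\<sigma> i + 1) - (real n + 1))))"

definition assumption_A1 ::
  "nat \<Rightarrow> nat \<Rightarrow> (nat \<Rightarrow> nat \<Rightarrow> real) \<Rightarrow> nat \<Rightarrow> (nat \<Rightarrow> nat set) \<Rightarrow> (nat \<Rightarrow> real)
   \<Rightarrow> (nat \<Rightarrow> real) \<Rightarrow> real \<Rightarrow> real \<Rightarrow> bool" where
  "assumption_A1 n p X g G w \<beta>s c0 b1 \<longleftrightarrow>
     (\<forall>j<p. (\<Sum>i<n. X i j) = 0) \<and>
     b1 > 0 \<and> (\<forall>i<n. \<forall>j<p. \<bar>X i j\<bar> \<le> b1) \<and>
     (\<exists>b2>0. \<forall>\<gamma>::nat \<Rightarrow> real.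
        (\<exists>j<p. \<gamma> j \<noteq> 0) \<and>
        Psi g G w (proj ({..<p} - Omega g G p \<beta>s) \<gamma>)
          \<le> (cbar c0 - 1) * Psi g G w (proj (Omega g G p \<beta>s) \<gamma>) \<longrightarrow>
        (\<Sum>i<n. (\<Sum>j<p. X i j * \<gamma> j)\<^sup>2) / (real n * (\<Sum>j<p. (\<gamma> j)\<^sup>2)) \<ge> b2)"

end

theory Submission
  imports Defs
begin

lemma hoeff_fin:
  fixes B :: "'a set" and y :: "'a \<Rightarrow> real" and l lo W :: real
  assumes fin: "finite B" and ne: "B \<noteq> {}" and l: "l > 0"
    and rng: "\<forall>b\<in>B. lo \<le> y b \<and> y b \<le> lo + W" and s0: "(\<Sum>b\<in>B. y b) = 0"
  shows "(\<Sum>b\<in>B. exp (l * y b)) \<le> real (card B) * exp (l\<^sup>2 * W\<^sup>2 / 8)"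
proof -
  interpret interval_bounded_random_variable "measure_pmf (pmf_of_set B)" y lo "lo + W"
  proof unfold_locales
    show "AE x in measure_pmf (pmf_of_set B). y x \<in> {lo..lo + W}"
      using rng fin ne by (simp add: AE_measure_pmf_iff)
  qed simp
  have E: "integral\<^sup>L (measure_pmf (pmf_of_set B)) y = 0" using fin ne s0 by (simp add: integral_pmf_of_set)
  have "nn_integral (measure_pmf (pmf_of_set B)) (\<lambda>x. exp (l * y x)) \<le> ennreal (exp (l\<^sup>2 * (lo + W - lo)\<^sup>2 / 8))"
    by (rule Hoeffdings_lemma_nn_integral_0[OF l E])
  also have "nn_integral (measure_pmf (pmf_of_set B)) (\<lambda>x. exp (l * y x)) = (\<Sum>b\<in>B. ennreal (exp (l * y b))) / card B"
    using fin ne by (simp add: nn_integral_pmf_of_set)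
  also have "(\<Sum>b\<in>B. ennreal (exp (l * y b))) = ennreal (\<Sum>b\<in>B. exp (l * y b))"
    by (simp add: sum_ennreal)
  finally have "ennreal (\<Sum>b\<in>B. exp (l * y b)) / ennreal (real (card B)) \<le> ennreal (exp (l\<^sup>2 * W\<^sup>2 / 8))"
    by (simp add: ennreal_of_nat_eq_real_of_nat)
  hence "ennreal ((\<Sum>b\<in>B. exp (l * y b)) / real (card B)) \<le> ennreal (exp (l\<^sup>2 * W\<^sup>2 / 8))"
    using fin ne by (subst divide_ennreal[symmetric]) (auto simp: card_gt_0_iff intro: sum_nonneg)
  hence "(\<Sum>b\<in>B. exp (l * y b)) / real (card B) \<le> exp (l\<^sup>2 * W\<^sup>2 / 8)"
    by (subst (asm) ennreal_le_iff) auto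
  moreover have "real (card B) > 0" using fin ne by (simp add: card_gt_0_iff)
  ultimately show ?thesis by (simp add: field_simps)
qed

lemma ident_aux: fixes M ax cb A C :: real assumes "M > 0"
  shows "ax*cb + A*(C-cb)/M = (A+ax)*C/(M+1) + (ax - A/M)*(cb - C/(M+1))"
proof -
  define r where "r = A / M"
  define q where "q = C / (M + 1)"
  have A: "A = r * M" using assms by (simp add: r_def)
  have C: "C = q * (M + 1)" using assms by (simp add: q_def)
  have e1: "A*(C-cb)/M = r*(C-cb)" by (simp add: r_def)
  have e2: "(A+ax)*C/(M+1) = (r*M+ax)*q" by (simp add: q_def A[symmetric])
  show ?thesis unfolding e1 e2 r_def[symmetric] q_def[symmetric] unfolding C by algebra
qed

lemma perm_mgf:
  fixes S :: "'a set" and a c :: "'a \<Rightarrow> real" and l b1 lo D :: real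
  assumes "finite S" "l > 0" "D \<ge> 0" "\<forall>i\<in>S. \<bar>a i\<bar> \<le> b1"
    "\<forall>k\<in>S. lo \<le> c k \<and> c k \<le> lo + D"
  shows "(\<Sum>q\<in>{q. q permutes S}. exp (l * (\<Sum>i\<in>S. a i * c (q i))))
     \<le> fact (card S) * exp (l * (\<Sum>i\<in>S. a i) * (\<Sum>i\<in>S. c i) / card S
                            + card S * (l\<^sup>2 * (b1\<^sup>2 * D\<^sup>2 / 2)))"
  using assms
proof (induction S arbitrary: c rule: finite_induct)
  case empty
  then show ?case by (simp)
next
  case (insert x S c)
  define m where "m = card S"
  define A' where "A' = (\<Sum>i\<in>S. a i)"
  define C where "C = (\<Sum>i\<in>insert x S. c i)"
  define K where "K = b1\<^sup>2 * D\<^sup>2 / 2"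
  have cardI: "card (insert x S) = m + 1" using insert by (simp add: m_def)
  have l: "l > 0" and D: "D \<ge> 0" using insert by auto
  have aS: "\<forall>i\<in>S. \<bar>a i\<bar> \<le> b1" and ax: "\<bar>a x\<bar> \<le> b1" using insert by auto
  have cI: "\<forall>k\<in>insert x S. lo \<le> c k \<and> c k \<le> lo + D" using insert by auto
  have inner: "(\<Sum>i\<in>insert x S. a i * c ((Transposition.transpose x b \<circ> q) i))
      = a x * c b + (\<Sum>i\<in>S. a i * (c \<circ> Transposition.transpose x b) (q i))"
    if "q permutes S" for b q
  proof -
    have "q x = x" using that insert(2) by (simp add: permutes_not_in)
    then show ?thesis using insert(1,2) by simp
  qed
  have csum: "(\<Sum>k\<in>S. (c \<circ> Transposition.transpose x b) k) = C - c b" if b: "b \<in> insert x S" for b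
  proof -
    have "Transposition.transpose x b permutes insert x S" using b by (intro permutes_swap_id) auto
    hence bij: "bij_betw (Transposition.transpose x b) (insert x S) (insert x S)" by (rule permutes_imp_bij)
    have "(\<Sum>k\<in>insert x S. (c \<circ> Transposition.transpose x b) k) = C"
      unfolding C_def using sum.reindex_bij_betw[OF bij, of c] by simp
    moreover have "(\<Sum>k\<in>insert x S. (c \<circ> Transposition.transpose x b) k) = c b + (\<Sum>k\<in>S. (c \<circ> Transposition.transpose x b) k)"
      using insert(1,2) by simp
    ultimately show ?thesis by simp
  qed
  have crng: "\<forall>k\<in>S. lo \<le> (c \<circ> Transposition.transpose x b) k \<and> (c \<circ> Transposition.transpose x b) k \<le> lo + D"
    if b: "b \<in> insert x S" for b
  proof
    fix k assume k: "k \<in> S"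
    have "Transposition.transpose x b k \<in> insert x S" using b k by (auto simp: Transposition.transpose_def)
    thus "lo \<le> (c \<circ> Transposition.transpose x b) k \<and> (c \<circ> Transposition.transpose x b) k \<le> lo + D" using cI by auto
  qed
  have perb: "(\<Sum>q\<in>{q. q permutes S}. exp (l * (\<Sum>i\<in>insert x S. a i * c ((Transposition.transpose x b \<circ> q) i))))
     \<le> fact m * exp (m * (l\<^sup>2 * K)) * exp (l * (a x * c b + A' * (C - c b) / m))"
    if b: "b \<in> insert x S" for b
  proof -
    have IH: "(\<Sum>q\<in>{q. q permutes S}. exp (l * (\<Sum>i\<in>S. a i * (c \<circ> Transposition.transpose x b) (q i))))
       \<le> fact m * exp (l * A' * (C - c b) / m + m * (l\<^sup>2 * K))"
      using insert.IH[of "c \<circ> Transposition.transpose x b"] l D aS crng[OF b] csum[OF b]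
      by (simp add: m_def A'_def K_def)
    have "(\<Sum>q\<in>{q. q permutes S}. exp (l * (\<Sum>i\<in>insert x S. a i * c ((Transposition.transpose x b \<circ> q) i))))
        = (\<Sum>q\<in>{q. q permutes S}. exp (l * (a x * c b)) * exp (l * (\<Sum>i\<in>S. a i * (c \<circ> Transposition.transpose x b) (q i))))"
      proof (intro sum.cong refl)
        fix q assume "q \<in> {q. q permutes S}"
        hence "q permutes S" by simp
        show "exp (l * (\<Sum>i\<in>insert x S. a i * c ((Transposition.transpose x b \<circ> q) i))) = exp (l * (a x * c b)) * exp (l * (\<Sum>i\<in>S. a i * (c \<circ> Transposition.transpose x b) (q i)))"
          unfolding inner[OF \<open>q permutes S\<close>] by (simp only: distrib_left exp_add)
      qed
    also have "\<dots> = exp (l * (a x * c b)) * (\<Sum>q\<in>{q. q permutes S}. exp (l * (\<Sum>i\<in>S. a i * (c \<circ> Transposition.transpose x b) (q i))))"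
      by (simp add: sum_distrib_left)
    also have "\<dots> \<le> exp (l * (a x * c b)) * (fact m * exp (l * A' * (C - c b) / m + m * (l\<^sup>2 * K)))"
      by (intro mult_left_mono IH) auto
    also have "\<dots> = fact m * exp (m * (l\<^sup>2 * K)) * exp (l * (a x * c b + A' * (C - c b) / m))"
      by (simp add: exp_add[symmetric] algebra_simps)
    finally show ?thesis .
  qed
  define \<alpha> where "\<alpha> = a x - A' / m"
  define \<mu> where "\<mu> = (A' + a x) * C / (m + 1)"
  define y where "y = (\<lambda>b. \<alpha> * (c b - C / (m + 1)))"
  have ident: "a x * c b + A' * (C - c b) / m = \<mu> + y b" for b
  proof (cases "m = 0")
    case True
    hence "S = {}" using insert(1) m_def by simp
    hence "A' = 0" by (simp add: A'_def)
    thus ?thesis using True by (simp add: \<mu>_def y_def \<alpha>_def algebra_simps)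
  next
    case False
    hence h1: "real m \<noteq> 0" and h2: "real m + 1 \<noteq> 0" by auto
    show ?thesis unfolding \<mu>_def y_def \<alpha>_def
      using ident_aux[of "real m" "a x" "c b" A' C] False by (simp add: add.commute)
  qed
  have ysum: "(\<Sum>b\<in>insert x S. y b) = 0"
  proof -
    have "(\<Sum>b\<in>insert x S. y b) = \<alpha> * (C - real (m + 1) * (C / (m + 1)))"
      unfolding y_def C_def using cardI
      by (simp add: sum_distrib_left[symmetric] sum_subtractf)
    also have "\<dots> = 0" by simp
    finally show ?thesis .
  qed
  have A'b: "\<bar>A'\<bar> \<le> m * b1"
  proof -
    have "\<bar>A'\<bar> \<le> (\<Sum>i\<in>S. \<bar>a i\<bar>)" unfolding A'_def by (rule sum_abs)
    also have "\<dots> \<le> (\<Sum>i\<in>S. b1)" using aS by (intro sum_mono) auto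
    finally show ?thesis by (simp add: m_def)
  qed
  have "\<bar>A' / m\<bar> \<le> b1"
  proof (cases "m = 0")
    case True then show ?thesis using ax by simp
  next
    case False then show ?thesis using A'b by (simp add: field_simps abs_divide)
  qed
  hence alpha: "\<bar>\<alpha>\<bar> \<le> 2 * b1" using ax unfolding \<alpha>_def by linarith
  obtain loy where yr: "\<forall>b\<in>insert x S. loy \<le> y b \<and> y b \<le> loy + \<bar>\<alpha>\<bar> * D"
  proof (cases "\<alpha> \<ge> 0")
    case True
    show ?thesis
    proof (rule that[of "\<alpha> * (lo - C / (m + 1))"], intro ballI)
      fix b assume "b \<in> insert x S"
      hence "lo \<le> c b" "c b \<le> lo + D" using cI by auto
      hence "\<alpha> * lo \<le> \<alpha> * c b" "\<alpha> * c b \<le> \<alpha> * (lo + D)" using True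
        by (auto intro: mult_left_mono)
      thus "\<alpha> * (lo - C / (m + 1)) \<le> y b \<and> y b \<le> \<alpha> * (lo - C / (m + 1)) + \<bar>\<alpha>\<bar> * D"
        using True by (simp add: y_def algebra_simps)
    qed
  next
    case False
    show ?thesis
    proof (rule that[of "\<alpha> * (lo + D - C / (m + 1))"], intro ballI)
      fix b assume "b \<in> insert x S"
      hence "lo \<le> c b" "c b \<le> lo + D" using cI by auto
      hence "\<alpha> * (lo + D) \<le> \<alpha> * c b" "\<alpha> * c b \<le> \<alpha> * lo" using False
        by (auto intro: mult_left_mono_neg)
      thus "\<alpha> * (lo + D - C / (m + 1)) \<le> y b \<and> y b \<le> \<alpha> * (lo + D - C / (m + 1)) + \<bar>\<alpha>\<bar> * D"
        using False by (simp add: y_def algebra_simps)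
    qed
  qed
  have hoef: "(\<Sum>b\<in>insert x S. exp (l * y b)) \<le> real (card (insert x S)) * exp (l\<^sup>2 * (\<bar>\<alpha>\<bar> * D)\<^sup>2 / 8)"
    by (rule hoeff_fin[OF _ _ l yr ysum]) (use insert in auto)
  have "(\<bar>\<alpha>\<bar> * D)\<^sup>2 \<le> (2 * b1 * D)\<^sup>2"
    using alpha D by (intro power_mono mult_right_mono) auto
  hence "l\<^sup>2 * (\<bar>\<alpha>\<bar> * D)\<^sup>2 \<le> l\<^sup>2 * (2 * b1 * D)\<^sup>2"
    by (intro mult_left_mono) auto
  hence "l\<^sup>2 * (\<bar>\<alpha>\<bar> * D)\<^sup>2 / 8 \<le> l\<^sup>2 * K"
    unfolding K_def by (simp add: power_mult_distrib mult_ac)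
  hence hoef2: "(\<Sum>b\<in>insert x S. exp (l * y b)) \<le> (m + 1) * exp (l\<^sup>2 * K)"
    using hoef cardI by (smt (verit, best) exp_le_cancel_iff mult_left_mono of_nat_0_le_iff)
  have "(\<Sum>q\<in>{q. q permutes insert x S}. exp (l * (\<Sum>i\<in>insert x S. a i * c (q i))))
      = (\<Sum>b\<in>insert x S. \<Sum>q\<in>{q. q permutes S}. exp (l * (\<Sum>i\<in>insert x S. a i * c ((Transposition.transpose x b \<circ> q) i))))"
    by (rule sum_over_permutations_insert[OF insert(1,2)])
  also have "\<dots> \<le> (\<Sum>b\<in>insert x S. fact m * exp (m * (l\<^sup>2 * K)) * exp (l * (a x * c b + A' * (C - c b) / m)))"
    by (intro sum_mono perb)
  also have "\<dots> = fact m * exp (m * (l\<^sup>2 * K)) * (exp (l * \<mu>) * (\<Sum>b\<in>insert x S. exp (l * y b)))"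
    by (simp add: ident sum_distrib_left distrib_left exp_add)
  also have "\<dots> \<le> fact m * exp (m * (l\<^sup>2 * K)) * (exp (l * \<mu>) * ((m + 1) * exp (l\<^sup>2 * K)))"
    by (intro mult_left_mono hoef2) auto
  also have "\<dots> = fact (m + 1) * exp (l * \<mu> + (m + 1) * (l\<^sup>2 * K))"
    by (simp add: exp_add algebra_simps)
  also have "\<dots> = fact (card (insert x S)) * exp (l * (\<Sum>i\<in>insert x S. a i) * (\<Sum>i\<in>insert x S. c i) / card (insert x S)
                            + card (insert x S) * (l\<^sup>2 * (b1\<^sup>2 * D\<^sup>2 / 2)))"
    using insert(1,2) cardI by (simp add: \<mu>_def A'_def C_def K_def algebra_simps)
  finally show ?case .
qed


lemma tail_count:
  fixes n :: nat and a :: "nat \<Rightarrow> real" and b1 u :: real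
  assumes n2: "n \<ge> 2" and ab: "\<forall>i<n. \<bar>a i\<bar> \<le> b1" and as0: "(\<Sum>i<n. a i) = 0"
    and u: "u > 0" and b1: "b1 > 0"
  shows "real (card {\<sigma>\<in>{\<sigma>. \<sigma> permutes {..<n}}. u \<le> (\<Sum>i<n. a i * (2 * real (\<sigma> i + 1) - (real n + 1)))})
     \<le> fact n * exp (- u\<^sup>2 / (8 * real n * (real n - 1)\<^sup>2 * b1\<^sup>2))"
proof -
  define P where "P = {\<sigma>. \<sigma> permutes {..<n}}"
  define c where "c = (\<lambda>k::nat. 2 * real (k + 1) - (real n + 1))"
  define T where "T = (\<lambda>\<sigma>. \<Sum>i<n. a i * c (\<sigma> i))"
  define D where "D = 2 * (real n - 1)"
  define K where "K = b1\<^sup>2 * D\<^sup>2 / 2"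
  define l where "l = u / (2 * real n * K)"
  have D: "D > 0" using n2 by (simp add: D_def)
  have K: "K > 0" using D b1 by (simp add: K_def)
  have npos: "real n > 0" using n2 by simp
  have l: "l > 0" using u K npos by (simp add: l_def)
  have finP: "finite P" unfolding P_def by (rule finite_permutations) simp
  have crng: "\<forall>k\<in>{..<n}. (1 - real n) \<le> c k \<and> c k \<le> (1 - real n) + D"
    by (auto simp: c_def D_def)
  have mgf: "(\<Sum>q\<in>P. exp (l * T q)) \<le> fact n * exp (real n * (l\<^sup>2 * K))"
    using perm_mgf[of "{..<n}" l D a b1 "1 - real n" c] l D ab crng as0
    by (simp add: P_def T_def K_def)
  define E where "E = {\<sigma>\<in>P. u \<le> T \<sigma>}"
  have "real (card E) * exp (l * u) = (\<Sum>q\<in>E. exp (l * u))" by simp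
  also have "\<dots> \<le> (\<Sum>q\<in>E. exp (l * T q))"
    by (intro sum_mono) (use l in \<open>auto simp: E_def\<close>)
  also have "\<dots> \<le> (\<Sum>q\<in>P. exp (l * T q))"
    by (intro sum_mono2 finP) (auto simp: E_def)
  also have "\<dots> \<le> fact n * exp (real n * (l\<^sup>2 * K))" by (rule mgf)
  finally have "real (card E) \<le> fact n * exp (real n * (l\<^sup>2 * K)) / exp (l * u)"
    by (simp add: field_simps)
  also have "\<dots> = fact n * exp (real n * (l\<^sup>2 * K) - l * u)" by (simp add: exp_diff)
  also have "real n * (l\<^sup>2 * K) - l * u = - u\<^sup>2 / (4 * real n * K)"
    using npos K by (simp add: l_def power2_eq_square field_simps)
  also have "4 * real n * K = 8 * real n * (real n - 1)\<^sup>2 * b1\<^sup>2"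
    by (simp add: K_def D_def power2_eq_square field_simps)
  finally show ?thesis by (simp add: E_def P_def T_def c_def)
qed

lemma frac_aux: fixes U s N M b :: real
  assumes "U\<^sup>2 = s\<^sup>2 * N\<^sup>2 * M\<^sup>2 / 4" "N \<noteq> 0" "M \<noteq> 0" "b \<noteq> 0"
  shows "U\<^sup>2 / (8 * N * M\<^sup>2 * b\<^sup>2) = (N * s\<^sup>2) / (32 * b\<^sup>2)"
proof -
  have "8 * N * M\<^sup>2 * b\<^sup>2 \<noteq> 0" "32 * b\<^sup>2 \<noteq> 0" using assms by auto
  hence "U\<^sup>2 / (8 * N * M\<^sup>2 * b\<^sup>2) = (N * s\<^sup>2) / (32 * b\<^sup>2) \<longleftrightarrow> U\<^sup>2 * (32 * b\<^sup>2) = (N * s\<^sup>2) * (8 * N * M\<^sup>2 * b\<^sup>2)"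
    by (rule frac_eq_eq)
  moreover have "U\<^sup>2 * (32 * b\<^sup>2) = (N * s\<^sup>2) * (8 * N * M\<^sup>2 * b\<^sup>2)"
    unfolding assms(1) by (simp add: power2_eq_square)
  ultimately show ?thesis by blast
qed

lemma coord_prob:
  fixes n :: nat and a :: "nat \<Rightarrow> real" and b1 s :: real
  assumes n2: "n \<ge> 2" and ab: "\<forall>i<n. \<bar>a i\<bar> \<le> b1" and as0: "(\<Sum>i<n. a i) = 0"
    and s: "s > 0" and b1: "b1 > 0"
  shows "measure_pmf.prob (pmf_of_set {\<sigma>. \<sigma> permutes {..<n}})
     {\<sigma>. s \<le> \<bar>- 2 / (real n * (real n - 1)) * (\<Sum>i<n. a i * (2 * real (\<sigma> i + 1) - (real n + 1)))\<bar>}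
     \<le> 2 * exp (- (real n * s\<^sup>2) / (32 * b1\<^sup>2))"
proof -
  define P where "P = {\<sigma>. \<sigma> permutes {..<n}}"
  define T where "T = (\<lambda>\<sigma>. \<Sum>i<n. a i * (2 * real (\<sigma> i + 1) - (real n + 1)))"
  define T' where "T' = (\<lambda>\<sigma>. \<Sum>i<n. (- a i) * (2 * real (\<sigma> i + 1) - (real n + 1)))"
  define u where "u = s * (real n * (real n - 1)) / 2"
  have nn: "real n * (real n - 1) > 0" using n2 by simp
  have n1: "real n - 1 > 0" using n2 by simp
  have u: "u > 0" using s nn by (simp add: u_def)
  have finP: "finite P" unfolding P_def by (rule finite_permutations) simp
  have neP: "P \<noteq> {}" unfolding P_def using permutes_id by blast
  have cardP: "card P = fact n" unfolding P_def by (rule card_permutations) auto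
  have T'T: "T' \<sigma> = - T \<sigma>" for \<sigma> by (simp add: T'_def T_def sum_negf)
  have sub: "{\<sigma>. s \<le> \<bar>- 2 / (real n * (real n - 1)) * T \<sigma>\<bar>} \<subseteq> {\<sigma>. u \<le> T \<sigma>} \<union> {\<sigma>. u \<le> T' \<sigma>}"
  proof
    fix \<sigma> assume "\<sigma> \<in> {\<sigma>. s \<le> \<bar>- 2 / (real n * (real n - 1)) * T \<sigma>\<bar>}"
    hence "s \<le> 2 / (real n * (real n - 1)) * \<bar>T \<sigma>\<bar>" using nn n1 by (simp add: abs_mult)
    hence "u \<le> \<bar>T \<sigma>\<bar>" using nn by (simp add: u_def field_simps)
    thus "\<sigma> \<in> {\<sigma>. u \<le> T \<sigma>} \<union> {\<sigma>. u \<le> T' \<sigma>}" by (auto simp: T'T abs_if split: if_splits)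
  qed
  have bound0: "u\<^sup>2 / (8 * real n * (real n - 1)\<^sup>2 * b1\<^sup>2) = (real n * s\<^sup>2) / (32 * b1\<^sup>2)"
  proof -
    have "u\<^sup>2 = s\<^sup>2 * (real n)\<^sup>2 * (real n - 1)\<^sup>2 / 4"
      by (simp add: u_def power_divide power_mult_distrib)
    moreover have "real n \<noteq> 0" "real n - 1 \<noteq> 0" "b1 \<noteq> 0" using n1 b1 n2 by auto
    ultimately show ?thesis using frac_aux by blast
  qed
  have bound: "exp (- u\<^sup>2 / (8 * real n * (real n - 1)\<^sup>2 * b1\<^sup>2)) = exp (- (real n * s\<^sup>2) / (32 * b1\<^sup>2))"
    using bound0 by (metis minus_divide_left)
  have p1: "measure_pmf.prob (pmf_of_set P) {\<sigma>. u \<le> T \<sigma>} \<le> exp (- (real n * s\<^sup>2) / (32 * b1\<^sup>2))"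
  proof -
    have "measure_pmf.prob (pmf_of_set P) {\<sigma>. u \<le> T \<sigma>} = card {\<sigma>\<in>P. u \<le> T \<sigma>} / fact n"
      using finP neP cardP by (simp add: measure_pmf_of_set Int_def)
    also have "\<dots> \<le> fact n * exp (- u\<^sup>2 / (8 * real n * (real n - 1)\<^sup>2 * b1\<^sup>2)) / fact n"
      using tail_count[OF n2 ab as0 u b1] by (intro divide_right_mono) (auto simp: P_def T_def)
    finally show ?thesis using bound by simp
  qed
  have p2: "measure_pmf.prob (pmf_of_set P) {\<sigma>. u \<le> T' \<sigma>} \<le> exp (- (real n * s\<^sup>2) / (32 * b1\<^sup>2))"
  proof -
    have ab': "\<forall>i<n. \<bar>- a i\<bar> \<le> b1" using ab by simp
    have as0': "(\<Sum>i<n. - a i) = 0" using as0 by (simp add: sum_negf)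
    have "measure_pmf.prob (pmf_of_set P) {\<sigma>. u \<le> T' \<sigma>} = card {\<sigma>\<in>P. u \<le> T' \<sigma>} / fact n"
      using finP neP cardP by (simp add: measure_pmf_of_set Int_def)
    also have "\<dots> \<le> fact n * exp (- u\<^sup>2 / (8 * real n * (real n - 1)\<^sup>2 * b1\<^sup>2)) / fact n"
      using tail_count[OF n2 ab' as0' u b1] by (intro divide_right_mono) (auto simp: P_def T'_def)
    finally show ?thesis using bound by simp
  qed
  have "measure_pmf.prob (pmf_of_set P) {\<sigma>. s \<le> \<bar>- 2 / (real n * (real n - 1)) * T \<sigma>\<bar>}
      \<le> measure_pmf.prob (pmf_of_set P) ({\<sigma>. u \<le> T \<sigma>} \<union> {\<sigma>. u \<le> T' \<sigma>})"
    by (intro measure_pmf.finite_measure_mono sub) simp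
  also have "\<dots> \<le> measure_pmf.prob (pmf_of_set P) {\<sigma>. u \<le> T \<sigma>} + measure_pmf.prob (pmf_of_set P) {\<sigma>. u \<le> T' \<sigma>}"
    by (intro measure_Un_le) simp_all
  also have "\<dots> \<le> 2 * exp (- (real n * s\<^sup>2) / (32 * b1\<^sup>2))" using p1 p2 by simp
  finally show ?thesis by (simp add: P_def T_def)
qed


theorem lemma3:
  fixes n p g :: nat and X :: "nat \<Rightarrow> nat \<Rightarrow> real" and \<beta>s :: "nat \<Rightarrow> real"
    and G :: "nat \<Rightarrow> nat set" and w :: "nat \<Rightarrow> real" and c0 b1 t :: real
  assumes n2: "n \<ge> 2"
    and p_pos: "p \<ge> 1"
    and groups_nonempty: "\<forall>l<g. G l \<noteq> {}"
    and groups_disjoint: "\<forall>l<g. \<forall>l'<g. l \<noteq> l' \<longrightarrow> G l \<inter> G l' = {}"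
    and groups_cover: "(\<Union>l<g. G l) = {..<p}"
    and weights_pos: "\<forall>l<g. w l > 0"
    and c0: "c0 > 1"
    and A1: "assumption_A1 n p X g G w \<beta>s c0 b1"
    and t_pos: "t > 0"
  shows "measure_pmf.prob (pmf_of_set {\<sigma>. \<sigma> permutes {..<n}})
           {\<sigma>. Psi_dual g G w (S_n n X \<sigma>) \<ge> t}
         \<le> 2 * real p * exp (- (real n * t\<^sup>2) / (32 * b1\<^sup>2 * (c_p g G w)\<^sup>2))"
proof -
  have colsum: "\<forall>j<p. (\<Sum>i<n. X i j) = 0" and b1: "b1 > 0" and Xb: "\<forall>i<n. \<forall>j<p. \<bar>X i j\<bar> \<le> b1"
    using A1 unfolding assumption_A1_def by auto
  define M where "M = measure_pmf.prob (pmf_of_set {\<sigma>. \<sigma> permutes {..<n}})"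
  define cp where "cp = c_p g G w"
  have g0: "g > 0"
  proof (rule ccontr)
    assume "\<not> g > 0" hence "g = 0" by simp
    hence e: "{..<p} = {}" using groups_cover by simp
    have "0 \<in> {..<p}" using p_pos by simp
    thus False using e by simp
  qed
  have Gsub: "G l \<subseteq> {..<p}" if "l < g" for l using groups_cover that by blast
  have Gfin: "finite (G l)" if "l < g" for l using Gsub[OF that] finite_subset by blast
  have cp_ge: "sqrt (real (card (G l))) / w l \<le> cp" if "l < g" for l
    unfolding cp_def c_p_def using that by (intro Max_ge) auto
  have cp_pos: "cp > 0"
  proof -
    have "card (G 0) > 0" using Gfin[OF g0] groups_nonempty g0 by (simp add: card_gt_0_iff)
    hence "sqrt (real (card (G 0))) / w 0 > 0" using weights_pos g0 by simp
    thus ?thesis using cp_ge[OF g0] by linarith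
  qed
  define s where "s = t / cp"
  have s: "s > 0" using t_pos cp_pos by (simp add: s_def)
  have sub: "{\<sigma>. Psi_dual g G w (S_n n X \<sigma>) \<ge> t} \<subseteq> (\<Union>j<p. {\<sigma>. s \<le> \<bar>S_n n X \<sigma> j\<bar>})"
  proof
    fix \<sigma> assume "\<sigma> \<in> {\<sigma>. Psi_dual g G w (S_n n X \<sigma>) \<ge> t}"
    hence ge: "Psi_dual g G w (S_n n X \<sigma>) \<ge> t" by simp
    define S where "S = S_n n X \<sigma>"
    have "Psi_dual g G w S \<in> (\<lambda>l. gnorm (G l) S / w l) ` {..<g}"
      unfolding Psi_dual_def using g0 by (intro Max_in) auto
    then obtain l where l: "l < g" and eq: "Psi_dual g G w S = gnorm (G l) S / w l" by auto
    show "\<sigma> \<in> (\<Union>j<p. {\<sigma>. s \<le> \<bar>S_n n X \<sigma> j\<bar>})"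
    proof (rule ccontr)
      assume "\<sigma> \<notin> (\<Union>j<p. {\<sigma>. s \<le> \<bar>S_n n X \<sigma> j\<bar>})"
      hence lt: "\<forall>j\<in>G l. \<bar>S j\<bar> < s" using Gsub[OF l] by (auto simp: S_def not_le)
      have "(\<Sum>j\<in>G l. (S j)\<^sup>2) < (\<Sum>j\<in>G l. s\<^sup>2)"
      proof (rule sum_strict_mono)
        fix j assume "j \<in> G l"
        hence "\<bar>S j\<bar> < s" using lt by auto
        hence "\<bar>S j\<bar>\<^sup>2 < s\<^sup>2" by (intro power_strict_mono) auto
        thus "(S j)\<^sup>2 < s\<^sup>2" by simp
      qed (use Gfin[OF l] groups_nonempty l in auto)
      hence "gnorm (G l) S < sqrt (real (card (G l)) * s\<^sup>2)"
        unfolding gnorm_def by simp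
      also have "\<dots> = sqrt (real (card (G l))) * s" using s by (simp add: real_sqrt_mult)
      finally have "gnorm (G l) S / w l < sqrt (real (card (G l))) * s / w l"
        using weights_pos l by (simp add: divide_strict_right_mono)
      also have "\<dots> = (sqrt (real (card (G l))) / w l) * s" by simp
      also have "\<dots> \<le> cp * s" using cp_ge[OF l] s by (intro mult_right_mono) auto
      also have "\<dots> = t" using cp_pos by (simp add: s_def)
      finally show False using ge eq by (simp add: S_def)
    qed
  qed
  have "M {\<sigma>. Psi_dual g G w (S_n n X \<sigma>) \<ge> t} \<le> M (\<Union>j<p. {\<sigma>. s \<le> \<bar>S_n n X \<sigma> j\<bar>})"
    unfolding M_def by (intro measure_pmf.finite_measure_mono sub) simp
  also have "\<dots> \<le> (\<Sum>j<p. M {\<sigma>. s \<le> \<bar>S_n n X \<sigma> j\<bar>})"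
    unfolding M_def by (intro measure_UNION_le) auto
  also have "\<dots> \<le> (\<Sum>j<p. 2 * exp (- (real n * s\<^sup>2) / (32 * b1\<^sup>2)))"
  proof (intro sum_mono)
    fix j assume j: "j \<in> {..<p}"
    have ab: "\<forall>i<n. \<bar>X i j\<bar> \<le> b1" using Xb j by auto
    have as0: "(\<Sum>i<n. X i j) = 0" using colsum j by auto
    show "M {\<sigma>. s \<le> \<bar>S_n n X \<sigma> j\<bar>} \<le> 2 * exp (- (real n * s\<^sup>2) / (32 * b1\<^sup>2))"
      using coord_prob[OF n2 ab as0 s b1] unfolding M_def S_n_def by simp
  qed
  also have "\<dots> = 2 * real p * exp (- (real n * t\<^sup>2) / (32 * b1\<^sup>2 * cp\<^sup>2))"
    using cp_pos by (simp add: s_def power_divide)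
  finally show ?thesis unfolding M_def cp_def .
qed

end
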